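(* Let $\delta=\sum_i a_i\delta_{x_i}$ be a purely discontinuous finite measure on $(-\pi,\pi)$, $b\in(-\pi,0)\cup(0,\pi)$, let $\delta_H$ be the polarization of $\delta$ with respect to $b$, and let $I=[b,\pi]$ if $b>0$ and $I=[-\pi,b]$ if $b<0$. Then: (a) for $x\in I$ and $x'=2b-x$: $u_\delta(x)+u_\delta(x')\le u_{\delta_H}(x)+u_{\delta_H}(x')$; (b) for $x\in I$ and $x'=2b-x$: $u_\delta(x)\le u_{\delta_H}(x')$; (c) if $b>0$ and $x\in[-\pi,b]$ (respectively $b<0$ and $x\in[b,\pi]$), then $u_\delta(x)\le u_{\delta_H}(x)$. Moreover, for $b>0$ (resp. $b<0$) the following are equivalent: (i) $u_\delta(x)=u_{\delta_H}(x)$ for some $x\in(-\pi,b]$ (resp. $x\in[b,\pi)$); (ii) this equality holds for all $x\in(-\pi,b]$ (resp. $x\in[b,\pi)$); (iii) $u_\delta\equiv u_{\delta_H}$ on $[-\pi,\pi]$; (iv) $\delta=\delta_H$.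
   Context: A purely discontinuous measure is $\delta=\sum_i a_i\delta_{x_i}$ with distinct points $x_i\in(-\pi,\pi)$, $a_i\ge0$, $\sum_i a_i<\infty$, not the zero measure. $G(x,y)=-\frac{xy}{2\pi}-\frac12|x-y|+\frac{\pi}{2}$ on $[-\pi,\pi]^2$ and $u_\delta(x)=\int G(x,y)\,d\delta(y)=\sum_i a_iG(x,x_i)$. Polarization of $\delta$ with respect to $b$ is the purely discontinuous measure $\delta_H$ defined by: for $b\in(0,\pi)$, $\delta_H(\{x\})=\delta(\{x\})$ for $x\in(-\pi,2b-\pi)$, $\delta_H(\{x\})=\max\{\delta(\{x\}),\delta(\{2b-x\})\}$ for $x\in[2b-\pi,b]$, $\delta_H(\{x\})=\min\{\delta(\{x\}),\delta(\{2b-x\})\}$ for $x\in[b,\pi)$; for $b\in(-\pi,0)$, $\delta_H(\{x\})=\min\{\delta(\{x\}),\delta(\{2b-x\})\}$ for $x\in(-\pi,b]$, $\delta_H(\{x\})=\max\{\delta(\{x\}),\delta(\{2b-x\})\}$ for $x\in[b,2b+\pi]$, $\delta_H(\{x\})=\delta(\{x\})$ for $x\in(2b+\pi,\pi)$. *)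

theory Defs
  imports "HOL-Analysis.Analysis"
begin

text \<open>A purely discontinuous finite measure on (-pi,pi) is represented by its mass
  function: a y is the mass of the atom at y (so the points are automatically distinct).\<close>

definition green :: "real \<Rightarrow> real \<Rightarrow> real" where
  "green x y = - (x * y) / (2 * pi) - \<bar>x - y\<bar> / 2 + pi / 2"

definition pd_measure :: "(real \<Rightarrow> real) \<Rightarrow> bool" where
  "pd_measure a \<longleftrightarrow> (\<forall>y. 0 \<le> a y) \<and> a summable_on UNIV
     \<and> (\<forall>y. a y \<noteq> 0 \<longrightarrow> -pi < y \<and> y < pi) \<and> (\<exists>y. a y \<noteq> 0)"

definition pot :: "(real \<Rightarrow> real) \<Rightarrow> real \<Rightarrow> real" where
  "pot a x = (\<Sum>\<^sub>\<infinity>y. a y * green x y)"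

definition polar :: "real \<Rightarrow> (real \<Rightarrow> real) \<Rightarrow> real \<Rightarrow> real" where
  "polar b a x =
    (if 0 < b then
       (if -pi < x \<and> x < 2*b - pi then a x
        else if 2*b - pi \<le> x \<and> x \<le> b then max (a x) (a (2*b - x))
        else if b \<le> x \<and> x < pi then min (a x) (a (2*b - x))
        else 0)
     else
       (if -pi < x \<and> x \<le> b then min (a x) (a (2*b - x))
        else if b \<le> x \<and> x \<le> 2*b + pi then max (a x) (a (2*b - x))
        else if 2*b + pi < x \<and> x < pi then a x
        else 0))"

end

theory Submission
  imports Defs
begin


lemma green_sym: "green x y = green y x"
  unfolding green_def by (simp add: abs_minus_commute mult.commute)

lemma green_neg: "green (-x) (-y) = green x y"
  unfolding green_def by (simp add: abs_minus_commute)

lemma green_T: "green x z + green (2*b-x) z - green x (2*b-z) - green (2*b-x) (2*b-z) = 2*b*(b-z)/pi"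
proof -
  have e1: "\<bar>(2*b-x) - (2*b-z)\<bar> = \<bar>x - z\<bar>" by arith
  have e2: "\<bar>x - (2*b-z)\<bar> = \<bar>(2*b-x) - z\<bar>" by arith
  show ?thesis unfolding green_def using e1 e2 by (simp add: field_simps)
qed

lemma green_B1: "green (2*b-x) z - green x (2*b-z) = b*(x-z)/pi"
proof -
  have e2: "\<bar>x - (2*b-z)\<bar> = \<bar>(2*b-x) - z\<bar>" by arith
  show ?thesis unfolding green_def using e2 by (simp add: field_simps)
qed

lemma green_B2: "green (2*b-x) z + green (2*b-x) (2*b-z) - green x z - green x (2*b-z) = 2*b*(x-b)/pi"
proof -
  have e1: "\<bar>(2*b-x) - (2*b-z)\<bar> = \<bar>x - z\<bar>" by arith
  have e2: "\<bar>x - (2*b-z)\<bar> = \<bar>(2*b-x) - z\<bar>" by arith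
  show ?thesis unfolding green_def using e1 e2 by (simp add: field_simps)
qed

lemma green_A_pos_aux:
  assumes b: "0 < b" "b < pi" and x: "-pi \<le> x" "x \<le> b" and z: "2*b - pi \<le> z" "z \<le> b"
  shows "0 \<le> green x z - green x (2*b-z) \<and> (-pi < x \<longrightarrow> z < b \<longrightarrow> 0 < green x z - green x (2*b-z))"
proof -
  define h where "h = green x z - green x (2*b-z)"
  have ph: "pi * h = x*(b-z) + pi*(\<bar>x-(2*b-z)\<bar> - \<bar>x-z\<bar>)/2"
    unfolding h_def green_def by (simp add: field_simps)
  have e: "\<bar>x-(2*b-z)\<bar> = 2*b - x - z" using x z by arith
  have "0 \<le> pi*h \<and> (-pi < x \<longrightarrow> z < b \<longrightarrow> 0 < pi*h)"
  proof (cases "x \<le> z")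
    case True
    then have "pi*h = (b-z)*(x+pi)" unfolding ph e by (simp add: field_simps)
    then show ?thesis using x z by (simp add: mult_pos_pos)
  next
    case False
    then have ph2: "pi*h = x*(b-z) + pi*(b-x)" unfolding ph e by (simp add: field_simps)
    show ?thesis
    proof (cases "0 \<le> x")
      case True
      have 1: "0 \<le> x*(b-z)" using True z by simp
      have 2: "0 \<le> pi*(b-x)" using x by simp
      have 3: "z < b \<Longrightarrow> x = b \<Longrightarrow> 0 < x*(b-z)" using b by simp
      have 4: "x < b \<Longrightarrow> 0 < pi*(b-x)" by simp
      show ?thesis using 1 2 3 4 ph2 x(2) by (smt (verit))
    next
      case False
      have "x*pi \<le> x*(b-z)" using False z b by (intro mult_left_mono_neg) auto
      moreover have d: "pi*(b-x) = pi*b - x*pi" by (simp add: algebra_simps)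
      ultimately have "pi*h \<ge> pi*b" using ph2 by linarith
      moreover have "pi*b > 0" using b by simp
      ultimately show ?thesis by linarith
    qed
  qed
  then show ?thesis unfolding h_def[symmetric] using pi_gt_zero
    by (simp add: zero_le_mult_iff zero_less_mult_iff)
qed

lemma green_A:
  assumes b: "b \<in> {-pi<..<0} \<union> {0<..<pi}"
    and x: "x \<in> (if 0<b then {-pi..b} else {b..pi})"
    and z: "z \<in> (if 0<b then {2*b-pi..b} else {b..2*b+pi})"
  shows "green x (2*b-z) \<le> green x z"
    and "x \<in> (if 0<b then {-pi<..b} else {b..<pi}) \<Longrightarrow> z \<noteq> b \<Longrightarrow> green x (2*b-z) < green x z"
proof -
  have "green x (2*b-z) \<le> green x z \<and> (x \<in> (if 0<b then {-pi<..b} else {b..<pi}) \<longrightarrow> z \<noteq> b \<longrightarrow> green x (2*b-z) < green x z)"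
  proof (cases "0 < b")
    case True
    then show ?thesis using green_A_pos_aux[of b x z] b x z by auto
  next
    case False
    have "0 < -b" "-b < pi" using b False by auto
    moreover have "-pi \<le> -x" "-x \<le> -b" "2*(-b) - pi \<le> -z" "-z \<le> -b" using x z False by auto
    ultimately have h: "0 \<le> green (-x) (-z) - green (-x) (2*(-b)-(-z)) \<and> (-pi < -x \<longrightarrow> -z < -b \<longrightarrow> 0 < green (-x) (-z) - green (-x) (2*(-b)-(-z)))"
      by (rule green_A_pos_aux)
    have "2*(-b)-(-z) = -(2*b-z)" by simp
    then have "green (-x) (2*(-b)-(-z)) = green x (2*b-z)" using green_neg by metis
    then show ?thesis using h False x z by (auto simp: green_neg)
  qed
  then show "green x (2*b-z) \<le> green x z"
    and "x \<in> (if 0<b then {-pi<..b} else {b..<pi}) \<Longrightarrow> z \<noteq> b \<Longrightarrow> green x (2*b-z) < green x z" by auto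
qed

definition nice :: "(real \<Rightarrow> real) \<Rightarrow> bool" where
  "nice m \<longleftrightarrow> (\<forall>y. 0 \<le> m y) \<and> m summable_on UNIV \<and> (\<forall>y. m y \<noteq> 0 \<longrightarrow> -pi < y \<and> y < pi)"

lemma green_bound: "\<bar>y\<bar> \<le> pi \<Longrightarrow> \<bar>green x y\<bar> \<le> \<bar>x\<bar> + pi"
proof -
  assume y: "\<bar>y\<bar> \<le> pi"
  have "\<bar>x*y\<bar> \<le> \<bar>x\<bar> * pi" unfolding abs_mult using y by (intro mult_left_mono) auto
  then have "\<bar>x*y/(2*pi)\<bar> \<le> \<bar>x\<bar>/2" by (simp add: field_simps)
  then have t1: "x*y/(2*pi) \<le> \<bar>x\<bar>/2" and t2: "- (\<bar>x\<bar>/2) \<le> x*y/(2*pi)" 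
    by (metis abs_le_D1 abs_le_D2 minus_le_iff)+
  have w: "\<bar>x - y\<bar> \<le> \<bar>x\<bar> + pi" using y by arith
  have w0: "\<bar>x - y\<bar> \<ge> 0" "\<bar>x\<bar> \<ge> 0" by simp_all
  have g: "green x y = - (x*y/(2*pi)) - \<bar>x - y\<bar>/2 + pi/2" unfolding green_def by simp
  have *: "\<And>t w X p::real. t \<le> X/2 \<Longrightarrow> -(X/2) \<le> t \<Longrightarrow> w \<le> X + p \<Longrightarrow> 0 \<le> w \<Longrightarrow> 0 \<le> X \<Longrightarrow> 0 < p
     \<Longrightarrow> \<bar>- t - w/2 + p/2\<bar> \<le> X + p" by (simp add: abs_le_iff)
  show ?thesis unfolding g by (rule *[OF t1 t2 w w0(1) w0(2) pi_gt_zero])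
qed

lemma nice_summ:
  assumes "nice m"
  shows "(\<lambda>y. m y * green x y) summable_on UNIV"
proof -
  have "(\<lambda>y. m y * (\<bar>x\<bar> + pi)) summable_on UNIV"
    using assms unfolding nice_def by (intro summable_on_cmult_left) auto
  moreover have "(\<lambda>y. norm (m y * (\<bar>x\<bar> + pi))) = (\<lambda>y. m y * (\<bar>x\<bar> + pi))"
    using assms unfolding nice_def by (auto simp: abs_mult)
  ultimately have "(\<lambda>y. norm (m y * (\<bar>x\<bar> + pi))) summable_on UNIV" by simp
  then have "(\<lambda>y. norm (m y * green x y)) summable_on UNIV"
  proof (rule Infinite_Sum.abs_summable_on_comparison_test)
    fix y
    show "norm (m y * green x y) \<le> norm (m y * (\<bar>x\<bar> + pi))"
    proof (cases "m y = 0")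
      case False
      then have "\<bar>y\<bar> \<le> pi" using assms unfolding nice_def by force
      then have "\<bar>green x y\<bar> \<le> \<bar>x\<bar> + pi" by (rule green_bound)
      moreover have "0 \<le> m y" using assms unfolding nice_def by auto
      ultimately show ?thesis by (simp add: abs_mult mult_left_mono)
    qed simp
  qed
  then show ?thesis by (rule abs_summable_summable)
qed

lemma refl_bij: "bij_betw (\<lambda>y::real. 2*b - y) UNIV UNIV"
  by (rule bij_betwI[where g="\<lambda>y. 2*b - y"]) auto

lemma refl_summable: "(f::real\<Rightarrow>real) summable_on UNIV \<Longrightarrow> (\<lambda>y. f (2*b - y)) summable_on UNIV"
  using summable_on_reindex_bij_betw[OF refl_bij[of b], of f] by simp

lemma refl_infsum: "infsum (\<lambda>y. (f::real\<Rightarrow>real) (2*b - y)) UNIV = infsum f UNIV"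
  using infsum_reindex_bij_betw[OF refl_bij[of b], of f] by simp

lemma sym_sum:
  fixes f :: "real \<Rightarrow> real"
  assumes "f summable_on UNIV"
  shows "infsum (\<lambda>y. f y + f (2*b-y)) UNIV = 2 * infsum f UNIV"
    and "(\<lambda>y. f y + f (2*b-y)) summable_on UNIV"
proof -
  show s: "(\<lambda>y. f y + f (2*b-y)) summable_on UNIV"
    using summable_on_add[OF assms refl_summable[OF assms]] by simp
  show "infsum (\<lambda>y. f y + f (2*b-y)) UNIV = 2 * infsum f UNIV"
    using infsum_add[OF assms refl_summable[OF assms, of b]] refl_infsum[of f b] by simp
qed

lemma sym_nonneg:
  fixes f :: "real \<Rightarrow> real"
  assumes "f summable_on UNIV" "\<And>y. 0 \<le> f y + f (2*b-y)"
  shows "0 \<le> infsum f UNIV"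
proof -
  have "0 \<le> infsum (\<lambda>y. f y + f (2*b-y)) UNIV" using assms(2) by (intro infsum_nonneg) auto
  then show ?thesis using sym_sum(1)[OF assms(1), of b] by simp
qed

lemma sym_zero:
  fixes f :: "real \<Rightarrow> real"
  assumes "f summable_on UNIV" "\<And>y. 0 \<le> f y + f (2*b-y)" "infsum f UNIV = 0"
  shows "f y0 + f (2*b-y0) = 0"
proof -
  let ?g = "\<lambda>y. f y + f (2*b-y)"
  have "infsum ?g {y0} \<le> infsum ?g UNIV"
    by (rule infsum_mono_neutral) (use sym_sum(2)[OF assms(1), of b] assms(2) in auto)
  then have "?g y0 \<le> 0" using sym_sum(1)[OF assms(1), of b] assms(3) by simp
  then show ?thesis using assms(2)[of y0] by linarith
qed

lemma infsum_diff':
  fixes f g :: "real \<Rightarrow> real"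
  assumes "f summable_on UNIV" "g summable_on UNIV"
  shows "infsum f UNIV - infsum g UNIV = infsum (\<lambda>y. f y - g y) UNIV"
    and "(\<lambda>y. f y - g y) summable_on UNIV"
proof -
  have g: "(\<lambda>y. - g y) summable_on UNIV" using assms(2) by (simp add: summable_on_uminus)
  show "(\<lambda>y. f y - g y) summable_on UNIV" using summable_on_add[OF assms(1) g] by simp
  show "infsum f UNIV - infsum g UNIV = infsum (\<lambda>y. f y - g y) UNIV"
    using infsum_add[OF assms(1) g] infsum_uminus[of g UNIV] by simp
qed

definition S1 where "S1 b a z \<longleftrightarrow> z \<in> (if 0<b then {2*b-pi..b} else {b..2*b+pi}) \<and>
  polar b a z = max (a z) (a (2*b-z)) \<and> polar b a (2*b-z) = min (a z) (a (2*b-z))"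
definition S2 where "S2 b a z \<longleftrightarrow> z \<in> (if 0<b then {-pi<..<b} else {b<..<pi}) \<and>
  polar b a z = a z \<and> a (2*b-z) = 0 \<and> polar b a (2*b-z) = 0"
definition S3 where "S3 b a z \<longleftrightarrow> a z = 0 \<and> polar b a z = 0 \<and> a (2*b-z) = 0 \<and> polar b a (2*b-z) = 0"

lemma shape:
  assumes a0: "\<And>y. 0 \<le> a y" and asupp: "\<And>y. a y \<noteq> 0 \<Longrightarrow> -pi < y \<and> y < pi"
    and b: "b \<in> {-pi<..<0} \<union> {0<..<pi}"
  shows "\<exists>z. (z = y \<or> z = 2*b-y) \<and> (S1 b a z \<or> S2 b a z \<or> S3 b a z)"
proof -
  have out: "\<And>y. y \<le> -pi \<or> pi \<le> y \<Longrightarrow> a y = 0" using asupp by force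
  have rr: "2*b - (2*b - y) = y" by simp
  show ?thesis
  proof (cases "0 < b")
    case True
    have bb: "b < pi" using b True by auto
    consider "y \<le> -pi" | "-pi < y \<and> y < 2*b-pi" | "2*b-pi \<le> y \<and> y \<le> b" | "b < y \<and> y < pi"
      | "pi \<le> y \<and> 2*b-y \<le> -pi" | "pi < y \<and> -pi < 2*b-y" | "y = pi" by linarith
    then show ?thesis
    proof cases
      case 1
      then have "S3 b a y" using True out[of y] out[of "2*b-y"] unfolding S3_def polar_def by auto
      then show ?thesis by blast
    next
      case 2
      then have "S2 b a y" using True bb out[of "2*b-y"] unfolding S2_def polar_def by auto
      then show ?thesis by blast
    next
      case 3
      then have "S1 b a y" using True bb out[of "2*b-y"] a0[of y] unfolding S1_def polar_def
        by (auto simp: rr)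
      then show ?thesis by blast
    next
      case 4
      then have "S1 b a (2*b-y)" using True bb unfolding S1_def polar_def
        by (auto simp: rr min.commute max.commute)
      then show ?thesis by blast
    next
      case 5
      then have "S3 b a y" using True out[of y] out[of "2*b-y"] unfolding S3_def polar_def by auto
      then show ?thesis by blast
    next
      case 6
      then have "S2 b a (2*b-y)" using True bb out[of y] unfolding S2_def polar_def by (auto simp: rr)
      then show ?thesis by blast
    next
      case 7
      then have "S1 b a (2*b-y)" using True bb out[of y] a0[of "2*b-y"] unfolding S1_def polar_def
        by (auto simp: rr)
      then show ?thesis by blast
    qed
  next
    case False
    have bb: "-pi < b" "b < 0" using b False by auto
    consider "pi \<le> y" | "2*b+pi < y \<and> y < pi" | "b \<le> y \<and> y \<le> 2*b+pi" | "-pi < y \<and> y < b"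
      | "y \<le> -pi \<and> pi \<le> 2*b-y" | "y < -pi \<and> 2*b-y < pi" | "y = -pi" by linarith
    then show ?thesis
    proof cases
      case 1
      then have "S3 b a y" using bb out[of y] out[of "2*b-y"] unfolding S3_def polar_def by auto
      then show ?thesis by blast
    next
      case 2
      then have "S2 b a y" using bb out[of "2*b-y"] unfolding S2_def polar_def by auto
      then show ?thesis by blast
    next
      case 3
      then have "S1 b a y" using bb out[of "2*b-y"] a0[of y] unfolding S1_def polar_def
        by (auto simp: rr)
      then show ?thesis by blast
    next
      case 4
      then have "S1 b a (2*b-y)" using bb unfolding S1_def polar_def
        by (auto simp: rr min.commute max.commute)
      then show ?thesis by blast
    next
      case 5
      then have "S3 b a y" using bb out[of y] out[of "2*b-y"] unfolding S3_def polar_def by auto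
      then show ?thesis by blast
    next
      case 6
      then have "S2 b a (2*b-y)" using bb out[of y] unfolding S2_def polar_def by (auto simp: rr)
      then show ?thesis by blast
    next
      case 7
      then have "S1 b a (2*b-y)" using bb out[of y] a0[of "2*b-y"] unfolding S1_def polar_def
        by (auto simp: rr)
      then show ?thesis by blast
    qed
  qed
qed

lemma polar_nice:
  assumes "pd_measure a" and b: "b \<in> {-pi<..<0} \<union> {0<..<pi}"
  shows "nice (polar b a)"
proof -
  have a0: "\<And>y. 0 \<le> a y" and s: "a summable_on UNIV" and asupp: "\<And>y. a y \<noteq> 0 \<Longrightarrow> -pi < y \<and> y < pi"
    using assms(1) unfolding pd_measure_def by auto
  have p0: "\<And>y. 0 \<le> polar b a y" unfolding polar_def using a0 by (auto simp: le_max_iff_disj)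
  have pl: "\<And>y. polar b a y \<le> a y + a (2*b-y)" unfolding polar_def using a0
    by (auto simp: add_increasing add_increasing2 min_le_iff_disj)
  have ps: "\<And>y. polar b a y \<noteq> 0 \<Longrightarrow> -pi < y \<and> y < pi"
    unfolding polar_def using b by (auto split: if_splits)
  have "(\<lambda>y. a y + a (2*b-y)) summable_on UNIV"
    using summable_on_add[OF s refl_summable[OF s, of b]] by simp
  then have "polar b a summable_on UNIV"
    by (rule summable_on_comparison_test) (use pl p0 in auto)
  then show ?thesis unfolding nice_def using p0 ps by auto
qed



lemma alg1: "(max p q - p)*C + (min p q - q)*(D::real) = (max p q - p)*(C - D)"
proof (cases "p \<le> q")
  case True
  then have "max p q = q" "min p q = p" by auto
  then show ?thesis by (simp add: algebra_simps)
next
  case False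
  then have "max p q = p" "min p q = q" by auto
  then show ?thesis by simp
qed

lemma alg2:
  fixes p q A B C D :: real
  assumes "0 \<le> p" "0 \<le> q" "C \<le> A" "D \<le> A" "C + D \<le> A + B"
  shows "0 \<le> max p q * A + min p q * B - p*C - q*D"
proof (cases "q \<le> p")
  case True
  then have m: "max p q = p" "min p q = q" by auto
  have "max p q * A + min p q * B - p*C - q*D = (p-q)*(A-C) + q*((A+B)-(C+D))"
    unfolding m by (simp add: algebra_simps)
  moreover have "0 \<le> (p-q)*(A-C)" using True assms by (intro mult_nonneg_nonneg) auto
  moreover have "0 \<le> q*((A+B)-(C+D))" using assms by (intro mult_nonneg_nonneg) auto
  ultimately show ?thesis by linarith
next
  case False
  then have m: "max p q = q" "min p q = p" by auto
  have "max p q * A + min p q * B - p*C - q*D = (q-p)*(A-D) + p*((A+B)-(C+D))"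
    unfolding m by (simp add: algebra_simps)
  moreover have "0 \<le> (q-p)*(A-D)" using False assms by (intro mult_nonneg_nonneg) auto
  moreover have "0 \<le> p*((A+B)-(C+D))" using assms by (intro mult_nonneg_nonneg) auto
  ultimately show ?thesis by linarith
qed
lemma sym_from_shape:
  assumes a0: "\<And>y. 0 \<le> a y" and asupp: "\<And>y. a y \<noteq> 0 \<Longrightarrow> -pi < y \<and> y < pi"
    and b: "b \<in> {-pi<..<0} \<union> {0<..<pi}"
    and h: "\<And>z. S1 b a z \<or> S2 b a z \<or> S3 b a z \<Longrightarrow> 0 \<le> (F::real\<Rightarrow>real) z + F (2*b-z)"
  shows "0 \<le> F y + F (2*b-y)"
proof -
  have ex: "\<exists>z. (z = y \<or> z = 2*b-y) \<and> (S1 b a z \<or> S2 b a z \<or> S3 b a z)"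
    by (rule shape[OF a0 asupp b])
  then obtain z where z1: "z = y \<or> z = 2*b-y" and z2: "S1 b a z \<or> S2 b a z \<or> S3 b a z"
    by (elim exE conjE)
  have 1: "0 \<le> F z + F (2*b-z)" by (rule h[OF z2])
  show ?thesis
  proof (cases "z = y")
    case True
    then show ?thesis using 1 by simp
  next
    case False
    then have zz: "z = 2*b-y" using z1 by (elim disjE) simp_all
    have "2*b - z = y" unfolding zz by simp
    then have "F z + F (2*b-z) = F y + F (2*b-y)" unfolding zz by simp
    then show ?thesis using 1 by linarith
  qed
qed

lemma pot_diff:
  assumes "nice m1" "nice m2"
  shows "pot m1 x - pot m2 x = infsum (\<lambda>y. (m1 y - m2 y) * green x y) UNIV"
    and "(\<lambda>y. (m1 y - m2 y) * green x y) summable_on UNIV"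
proof -
  have e: "(\<lambda>y. m1 y * green x y - m2 y * green x y) = (\<lambda>y. (m1 y - m2 y) * green x y)"
    by (auto simp: algebra_simps)
  show "pot m1 x - pot m2 x = infsum (\<lambda>y. (m1 y - m2 y) * green x y) UNIV"
    unfolding pot_def using infsum_diff'(1)[OF nice_summ[OF assms(1), of x] nice_summ[OF assms(2), of x]] e by simp
  show "(\<lambda>y. (m1 y - m2 y) * green x y) summable_on UNIV"
    using infsum_diff'(2)[OF nice_summ[OF assms(1), of x] nice_summ[OF assms(2), of x]] e by simp
qed

lemma pot_diff2:
  assumes "nice m1" "nice m2"
  shows "pot m1 x' - pot m2 x = infsum (\<lambda>y. m1 y * green x' y - m2 y * green x y) UNIV"
    and "(\<lambda>y. m1 y * green x' y - m2 y * green x y) summable_on UNIV"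
proof -
  note s1 = nice_summ[OF assms(1), of x'] and s2 = nice_summ[OF assms(2), of x]
  show "pot m1 x' - pot m2 x = infsum (\<lambda>y. m1 y * green x' y - m2 y * green x y) UNIV"
    unfolding pot_def by (rule infsum_diff'(1)[OF s1 s2])
  show "(\<lambda>y. m1 y * green x' y - m2 y * green x y) summable_on UNIV"
    by (rule infsum_diff'(2)[OF s1 s2])
qed

lemma S23_eq: "S2 b a z \<or> S3 b a z \<Longrightarrow> polar b a z = a z \<and> polar b a (2*b-z) = a (2*b-z)"
  unfolding S2_def S3_def by auto

lemma frac_nonneg: "0 \<le> b*(t::real) \<Longrightarrow> 0 \<le> 2*b*t/pi"
  by (simp add: mult.assoc)

lemma pt_c:
  assumes a0: "\<And>y. 0 \<le> a y" and asupp: "\<And>y. a y \<noteq> 0 \<Longrightarrow> -pi < y \<and> y < pi"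
    and b: "b \<in> {-pi<..<0} \<union> {0<..<pi}"
    and x: "x \<in> (if 0<b then {-pi..b} else {b..pi})"
  shows "0 \<le> (polar b a y - a y) * green x y + (polar b a (2*b-y) - a (2*b-y)) * green x (2*b-y)"
proof (rule sym_from_shape[OF a0 asupp b, where F="\<lambda>y. (polar b a y - a y) * green x y"])
  fix z assume "S1 b a z \<or> S2 b a z \<or> S3 b a z"
  then consider "S1 b a z" | "S2 b a z \<or> S3 b a z" by blast
  then show "0 \<le> (polar b a z - a z) * green x z + (polar b a (2*b-z) - a (2*b-z)) * green x (2*b-z)"
  proof cases
    case 1
    then have zr: "z \<in> (if 0<b then {2*b-pi..b} else {b..2*b+pi})"
      and p1: "polar b a z = max (a z) (a (2*b-z))" and p2: "polar b a (2*b-z) = min (a z) (a (2*b-z))"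
      unfolding S1_def by auto
    have e: "(polar b a z - a z) * green x z + (polar b a (2*b-z) - a (2*b-z)) * green x (2*b-z)
      = (max (a z) (a (2*b-z)) - a z) * (green x z - green x (2*b-z))"
      unfolding p1 p2 by (rule alg1)
    have "0 \<le> (max (a z) (a (2*b-z)) - a z) * (green x z - green x (2*b-z))"
      using green_A(1)[OF b x zr] by (intro mult_nonneg_nonneg) auto
    then show ?thesis unfolding e .
  next
    case 2
    then show ?thesis using S23_eq by auto
  qed
qed

lemma pt_a:
  assumes a0: "\<And>y. 0 \<le> a y" and asupp: "\<And>y. a y \<noteq> 0 \<Longrightarrow> -pi < y \<and> y < pi"
    and b: "b \<in> {-pi<..<0} \<union> {0<..<pi}"
  shows "0 \<le> (polar b a y - a y) * (green x y + green (2*b-x) y)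
     + (polar b a (2*b-y) - a (2*b-y)) * (green x (2*b-y) + green (2*b-x) (2*b-y))"
proof (rule sym_from_shape[OF a0 asupp b, where F="\<lambda>y. (polar b a y - a y) * (green x y + green (2*b-x) y)"])
  fix z assume "S1 b a z \<or> S2 b a z \<or> S3 b a z"
  then consider "S1 b a z" | "S2 b a z \<or> S3 b a z" by blast
  then show "0 \<le> (polar b a z - a z) * (green x z + green (2*b-x) z)
     + (polar b a (2*b-z) - a (2*b-z)) * (green x (2*b-z) + green (2*b-x) (2*b-z))"
  proof cases
    case 1
    then have zr: "z \<in> (if 0<b then {2*b-pi..b} else {b..2*b+pi})"
      and p1: "polar b a z = max (a z) (a (2*b-z))" and p2: "polar b a (2*b-z) = min (a z) (a (2*b-z))"
      unfolding S1_def by auto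
    have e: "(polar b a z - a z) * (green x z + green (2*b-x) z) + (polar b a (2*b-z) - a (2*b-z)) * (green x (2*b-z) + green (2*b-x) (2*b-z))
      = (max (a z) (a (2*b-z)) - a z) * ((green x z + green (2*b-x) z) - (green x (2*b-z) + green (2*b-x) (2*b-z)))"
      unfolding p1 p2 by (rule alg1)
    have t: "(green x z + green (2*b-x) z) - (green x (2*b-z) + green (2*b-x) (2*b-z)) = 2*b*(b-z)/pi"
      using green_T[of x z b] by simp
    have "0 \<le> b*(b-z)"
    proof (cases "0 < b")
      case True then show ?thesis using zr by simp
    next
      case False then show ?thesis using zr by (intro mult_nonpos_nonpos) auto
    qed
    then have "0 \<le> 2*b*(b-z)/pi" by (rule frac_nonneg)
    then have "0 \<le> (max (a z) (a (2*b-z)) - a z) * ((green x z + green (2*b-x) z) - (green x (2*b-z) + green (2*b-x) (2*b-z)))"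
      unfolding t by (intro mult_nonneg_nonneg) auto
    then show ?thesis unfolding e .
  next
    case 2
    then show ?thesis using S23_eq by auto
  qed
qed

lemma pt_b:
  assumes a0: "\<And>y. 0 \<le> a y" and asupp: "\<And>y. a y \<noteq> 0 \<Longrightarrow> -pi < y \<and> y < pi"
    and b: "b \<in> {-pi<..<0} \<union> {0<..<pi}"
    and x: "x \<in> (if 0<b then {b..pi} else {-pi..b})"
  shows "0 \<le> (polar b a y * green (2*b-x) y - a y * green x y)
     + (polar b a (2*b-y) * green (2*b-x) (2*b-y) - a (2*b-y) * green x (2*b-y))"
proof (rule sym_from_shape[OF a0 asupp b, where F="\<lambda>y. polar b a y * green (2*b-x) y - a y * green x y"])
  have x': "2*b-x \<in> (if 0<b then {2*b-pi..b} else {b..2*b+pi})" using x by (auto split: if_splits)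
  have CA: "green x z \<le> green (2*b-x) z" if "z \<in> (if 0<b then {-pi..b} else {b..pi})" for z
  proof -
    have "green z (2*b - (2*b-x)) \<le> green z (2*b-x)" by (rule green_A(1)[OF b that x'])
    then show ?thesis by (simp add: green_sym)
  qed
  fix z assume "S1 b a z \<or> S2 b a z \<or> S3 b a z"
  then consider "S1 b a z" | "S2 b a z" | "S3 b a z" by blast
  then show "0 \<le> (polar b a z * green (2*b-x) z - a z * green x z)
     + (polar b a (2*b-z) * green (2*b-x) (2*b-z) - a (2*b-z) * green x (2*b-z))"
  proof cases
    case 1
    then have zr: "z \<in> (if 0<b then {2*b-pi..b} else {b..2*b+pi})"
      and p1: "polar b a z = max (a z) (a (2*b-z))" and p2: "polar b a (2*b-z) = min (a z) (a (2*b-z))"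
      unfolding S1_def by auto
    have zr2: "z \<in> (if 0<b then {-pi..b} else {b..pi})" using zr b by (auto split: if_splits)
    have h1: "green x z \<le> green (2*b-x) z" by (rule CA[OF zr2])
    have "0 \<le> b*(x-z)"
    proof (cases "0 < b")
      case True then show ?thesis using zr x by simp
    next
      case False then show ?thesis using zr x by (intro mult_nonpos_nonpos) auto
    qed
    then have "0 \<le> b*(x-z)/pi" by simp
    then have h2: "green x (2*b-z) \<le> green (2*b-x) z" using green_B1[of b x z] by linarith
    have "0 \<le> b*(x-b)"
    proof (cases "0 < b")
      case True then show ?thesis using x by simp
    next
      case False then show ?thesis using x by (intro mult_nonpos_nonpos) auto
    qed
    then have "0 \<le> 2*b*(x-b)/pi" by (rule frac_nonneg)
    then have h3: "green x z + green x (2*b-z) \<le> green (2*b-x) z + green (2*b-x) (2*b-z)"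
      using green_B2[of b x z] by linarith
    have "0 \<le> max (a z) (a (2*b-z)) * green (2*b-x) z + min (a z) (a (2*b-z)) * green (2*b-x) (2*b-z)
        - a z * green x z - a (2*b-z) * green x (2*b-z)"
      by (rule alg2[OF a0 a0 h1 h2 h3])
    then show ?thesis unfolding p1 p2 by linarith
  next
    case 2
    then have zr: "z \<in> (if 0<b then {-pi<..<b} else {b<..<pi})" and p1: "polar b a z = a z"
      and p2: "a (2*b-z) = 0" "polar b a (2*b-z) = 0"
      unfolding S2_def by auto
    have zr2: "z \<in> (if 0<b then {-pi..b} else {b..pi})" using zr b by (auto split: if_splits)
    have "0 \<le> a z * (green (2*b-x) z - green x z)"
      using CA[OF zr2] a0[of z] by (intro mult_nonneg_nonneg) auto
    then show ?thesis unfolding p1 p2 by (simp add: algebra_simps)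
  next
    case 3
    then show ?thesis unfolding S3_def by simp
  qed
qed

lemma pd_nice: "pd_measure a \<Longrightarrow> nice a"
  unfolding pd_measure_def nice_def by auto

lemma keyK:
  assumes pd: "pd_measure a" and b: "b \<in> {-pi<..<0} \<union> {0<..<pi}"
    and x0: "x0 \<in> (if 0<b then {-pi<..b} else {b..<pi})"
    and eq: "pot a x0 = pot (polar b a) x0"
  shows "a = polar b a"
proof -
  have a0: "\<And>y. 0 \<le> a y" and asupp: "\<And>y. a y \<noteq> 0 \<Longrightarrow> -pi < y \<and> y < pi"
    using pd unfolding pd_measure_def by auto
  have na: "nice a" by (rule pd_nice[OF pd])
  have np: "nice (polar b a)" by (rule polar_nice[OF pd b])
  have x0c: "x0 \<in> (if 0<b then {-pi..b} else {b..pi})" using x0 by (auto split: if_splits)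
  let ?F = "\<lambda>y. (polar b a y - a y) * green x0 y"
  have s: "?F summable_on UNIV" by (rule pot_diff(2)[OF np na])
  have i0: "infsum ?F UNIV = 0" using pot_diff(1)[OF np na, of x0] eq by simp
  have z0: "\<And>y0. ?F y0 + ?F (2*b-y0) = 0"
    by (rule sym_zero[OF s _ i0]) (rule pt_c[OF a0 asupp b x0c])
  show ?thesis
  proof (rule ext, rule ccontr)
    fix y assume ne: "a y \<noteq> polar b a y"
    have ex: "\<exists>z. (z = y \<or> z = 2*b-y) \<and> (S1 b a z \<or> S2 b a z \<or> S3 b a z)"
      by (rule shape[OF a0 asupp b])
    then obtain z where z1: "z = y \<or> z = 2*b-y" and z2: "S1 b a z \<or> S2 b a z \<or> S3 b a z"
      by (elim exE conjE)
    have rr: "2*b - (2*b - y) = y" by simp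
    have nboth: "\<not> (polar b a z = a z \<and> polar b a (2*b-z) = a (2*b-z))"
    proof
      assume h: "polar b a z = a z \<and> polar b a (2*b-z) = a (2*b-z)"
      from z1 show False
      proof
        assume "z = y" then show False using h ne by simp
      next
        assume "z = 2*b-y" then show False using h ne rr by simp
      qed
    qed
    then have S1z: "S1 b a z" using z2 S23_eq by blast
    then have zr: "z \<in> (if 0<b then {2*b-pi..b} else {b..2*b+pi})"
      and p1: "polar b a z = max (a z) (a (2*b-z))" and p2: "polar b a (2*b-z) = min (a z) (a (2*b-z))"
      unfolding S1_def by auto
    have lt: "a z < a (2*b-z)"
    proof (rule ccontr)
      assume "\<not> a z < a (2*b-z)"
      then have "max (a z) (a (2*b-z)) = a z" "min (a z) (a (2*b-z)) = a (2*b-z)" by auto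
      then show False using nboth p1 p2 by simp
    qed
    have zb: "z \<noteq> b" using lt by auto
    have gl: "green x0 (2*b-z) < green x0 z" by (rule green_A(2)[OF b x0c zr x0 zb])
    have e: "?F z + ?F (2*b-z) = (max (a z) (a (2*b-z)) - a z) * (green x0 z - green x0 (2*b-z))"
      unfolding p1 p2 by (rule alg1)
    have "0 < (max (a z) (a (2*b-z)) - a z) * (green x0 z - green x0 (2*b-z))"
      using lt gl by (intro mult_pos_pos) auto
    then show False using e z0[of z] by simp
  qed
qed

theorem lemma4p4:
  fixes a :: "real \<Rightarrow> real" and b :: real
  assumes "pd_measure a"
    and "b \<in> {-pi<..<0} \<union> {0<..<pi}"
  shows
    "(\<forall>x \<in> (if 0 < b then {b..pi} else {-pi..b}).
        pot a x + pot a (2*b - x) \<le> pot (polar b a) x + pot (polar b a) (2*b - x))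
   \<and> (\<forall>x \<in> (if 0 < b then {b..pi} else {-pi..b}).
        pot a x \<le> pot (polar b a) (2*b - x))
   \<and> (\<forall>x \<in> (if 0 < b then {-pi..b} else {b..pi}). pot a x \<le> pot (polar b a) x)
   \<and> ((\<exists>x \<in> (if 0 < b then {-pi<..b} else {b..<pi}). pot a x = pot (polar b a) x)
        \<longleftrightarrow> (\<forall>x \<in> (if 0 < b then {-pi<..b} else {b..<pi}). pot a x = pot (polar b a) x))
   \<and> ((\<forall>x \<in> (if 0 < b then {-pi<..b} else {b..<pi}). pot a x = pot (polar b a) x)
        \<longleftrightarrow> (\<forall>x \<in> {-pi..pi}. pot a x = pot (polar b a) x))
   \<and> ((\<forall>x \<in> {-pi..pi}. pot a x = pot (polar b a) x) \<longleftrightarrow> a = polar b a)"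
proof -
  note pd = assms(1) and b = assms(2)
  have a0: "\<And>y. 0 \<le> a y" and asupp: "\<And>y. a y \<noteq> 0 \<Longrightarrow> -pi < y \<and> y < pi"
    using pd unfolding pd_measure_def by auto
  have na: "nice a" by (rule pd_nice[OF pd])
  have np: "nice (polar b a)" by (rule polar_nice[OF pd b])
  have C: "pot a x \<le> pot (polar b a) x" if x: "x \<in> (if 0 < b then {-pi..b} else {b..pi})" for x
  proof -
    have "0 \<le> infsum (\<lambda>y. (polar b a y - a y) * green x y) UNIV"
      by (rule sym_nonneg[OF pot_diff(2)[OF np na]]) (rule pt_c[OF a0 asupp b x])
    then show ?thesis using pot_diff(1)[OF np na, of x] by simp
  qed
  have A: "pot a x + pot a (2*b - x) \<le> pot (polar b a) x + pot (polar b a) (2*b - x)" for x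
  proof -
    let ?F1 = "\<lambda>y. (polar b a y - a y) * green x y"
    let ?F2 = "\<lambda>y. (polar b a y - a y) * green (2*b-x) y"
    have s1: "?F1 summable_on UNIV" and s2: "?F2 summable_on UNIV" by (rule pot_diff(2)[OF np na])+
    have sum: "infsum ?F1 UNIV + infsum ?F2 UNIV = infsum (\<lambda>y. ?F1 y + ?F2 y) UNIV"
      using infsum_add[OF s1 s2] by simp
    have s12: "(\<lambda>y. ?F1 y + ?F2 y) summable_on UNIV" using summable_on_add[OF s1 s2] by simp
    have "0 \<le> infsum (\<lambda>y. ?F1 y + ?F2 y) UNIV"
    proof (rule sym_nonneg[OF s12])
      fix y
      show "0 \<le> (?F1 y + ?F2 y) + (?F1 (2*b-y) + ?F2 (2*b-y))"
      proof -
        have h: "0 \<le> (polar b a y - a y) * (green x y + green (2*b-x) y)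
           + (polar b a (2*b-y) - a (2*b-y)) * (green x (2*b-y) + green (2*b-x) (2*b-y))"
          by (rule pt_a[OF a0 asupp b])
        then show ?thesis by (simp add: algebra_simps)
      qed
    qed
    then show ?thesis using sum pot_diff(1)[OF np na, of x] pot_diff(1)[OF np na, of "2*b-x"] by linarith
  qed
  have B: "pot a x \<le> pot (polar b a) (2*b - x)" if x: "x \<in> (if 0 < b then {b..pi} else {-pi..b})" for x
  proof -
    have "0 \<le> infsum (\<lambda>y. polar b a y * green (2*b-x) y - a y * green x y) UNIV"
      by (rule sym_nonneg[OF pot_diff2(2)[OF np na]]) (rule pt_b[OF a0 asupp b x])
    then show ?thesis using pot_diff2(1)[OF np na, of "2*b-x" x] by simp
  qed
  let ?XK = "if 0 < b then {-pi<..b} else {b..<pi}"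
  have bXK: "b \<in> ?XK" using b by auto
  have XKsub: "?XK \<subseteq> {-pi..pi}" using b by auto
  have E1: "a = polar b a" if "\<exists>x \<in> ?XK. pot a x = pot (polar b a) x"
    using that keyK[OF pd b] by blast
  let ?E1 = "\<exists>x \<in> ?XK. pot a x = pot (polar b a) x"
  let ?E2 = "\<forall>x \<in> ?XK. pot a x = pot (polar b a) x"
  let ?E3 = "\<forall>x \<in> {-pi..pi}. pot a x = pot (polar b a) x"
  let ?E4 = "a = polar b a"
  have i41: "?E4 \<Longrightarrow> ?E3" by simp
  have i42: "?E4 \<Longrightarrow> ?E2" by simp
  have i21: "?E2 \<Longrightarrow> ?E1" using bXK by blast
  have i32: "?E3 \<Longrightarrow> ?E2" using XKsub by blast
  have p1: "?E1 = ?E2" using E1 i42 i21 by blast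
  have p2: "?E2 = ?E3" using E1 i41 i21 i32 by blast
  have p3: "?E3 = ?E4" using E1 i41 i21 i32 by blast
  have pA: "\<forall>x \<in> (if 0 < b then {b..pi} else {-pi..b}).
        pot a x + pot a (2*b - x) \<le> pot (polar b a) x + pot (polar b a) (2*b - x)" using A by blast
  have pB: "\<forall>x \<in> (if 0 < b then {b..pi} else {-pi..b}). pot a x \<le> pot (polar b a) (2*b - x)"
    using B by blast
  have pC: "\<forall>x \<in> (if 0 < b then {-pi..b} else {b..pi}). pot a x \<le> pot (polar b a) x"
    using C by blast
  show ?thesis using pA pB pC p1 p2 p3 by (intro conjI)
qed

end
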